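(* Let $n\geq 3$, let $X$ be the blowup of $\mathbb{P}^n$ at a point with Calabi-symmetric K\"ahler form $\omega$, and let $\alpha_t$ solve the line bundle mean curvature flow starting at a Calabi-symmetric $\alpha_0$. If $\Theta(\alpha_0)>(n-2)\frac{\pi}{2}$ on $X$, then $\Theta(\alpha_t)>(n-2)\frac{\pi}{2}$ on $X$ for all $t$ for which the flow is defined.
   Context: Line bundle mean curvature flow: $\alpha_t=\alpha_0+i\partial\bar\partial\phi_t$, $\dot\phi_t=\Theta(\alpha_t)-\hat\theta$ where $\hat\theta\in\mathbb{R}$ is a constant and $\Theta(\alpha_t)=\sum_k\arctan(\lambda_k)$ with $\lambda_k$ the eigenvalues of $\omega^{-1}\alpha_t$. The condition $\Theta>(n-2)\frac\pi2$ is called supercritical phase. Calabi symmetry means that on $X\setminus(H\cup E)\cong\mathbb{C}^n\setminus\{0\}$ the forms are $i\partial\bar\partial$ of functions of $\rho=\log|z|^2$ with the standard boundary asymptotics making them extend to $X$ in the classes $a[H]-[E]$ and $p[H]-q[E]$ respectively. *)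

theory Defs
  imports "HOL-Analysis.Analysis"
begin

definition smooth1_on :: "real set \<Rightarrow> (real \<Rightarrow> real) \<Rightarrow> bool" where
  "smooth1_on S f \<longleftrightarrow> (\<forall>k. \<forall>x\<in>S. ((deriv ^^ k) f) differentiable (at x))"

definition pd1 :: "(real \<times> real \<Rightarrow> real) \<Rightarrow> real \<times> real \<Rightarrow> real" where
  "pd1 g = (\<lambda>(t,s). deriv (\<lambda>t'. g (t', s)) t)"

definition pd2 :: "(real \<times> real \<Rightarrow> real) \<Rightarrow> real \<times> real \<Rightarrow> real" where
  "pd2 g = (\<lambda>(t,s). deriv (\<lambda>s'. g (t, s')) s)"

fun pds :: "bool list \<Rightarrow> (real \<times> real \<Rightarrow> real) \<Rightarrow> real \<times> real \<Rightarrow> real" where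
  "pds [] g = g"
| "pds (b # bs) g = (if b then pd1 else pd2) (pds bs g)"

definition smooth2_on :: "(real \<times> real) set \<Rightarrow> (real \<times> real \<Rightarrow> real) \<Rightarrow> bool" where
  "smooth2_on U g \<longleftrightarrow>
     (\<forall>bs. continuous_on U (pds bs g) \<and>
        (\<forall>(t,s)\<in>U. (\<lambda>t'. pds bs g (t', s)) differentiable (at t)
                   \<and> (\<lambda>s'. pds bs g (t, s')) differentiable (at s)))"

text \<open>On X minus (H union E), identified with C^n minus 0, a Calabi symmetric form is
  i ddbar f(rho), rho = log |z|^2.  The potential f gives a smooth closed (1,1)-form on X in the
  class p[H] - q[E] iff f is smooth in rho, and f(rho) - q rho is a smooth function of
  e^rho near E (rho \<rightarrow> -\<infinity>) and f(rho) - p rho is a smooth function of e^(-rho)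
  near H (rho \<rightarrow> +\<infinity>).\<close>
definition calabi_potential :: "real \<Rightarrow> real \<Rightarrow> (real \<Rightarrow> real) \<Rightarrow> bool" where
  "calabi_potential p q f \<longleftrightarrow>
     smooth1_on UNIV f \<and>
     (\<exists>\<delta>>0. \<exists>F G. smooth1_on {-\<delta><..<\<delta>} F \<and> smooth1_on {-\<delta><..<\<delta>} G \<and>
        (\<forall>\<rho>. exp \<rho> < \<delta> \<longrightarrow> f \<rho> = q * \<rho> + F (exp \<rho>)) \<and>
        (\<forall>\<rho>. exp (-\<rho>) < \<delta> \<longrightarrow> f \<rho> = p * \<rho> + G (exp (-\<rho>))))"

text \<open>Calabi symmetric Kaehler form in the class a[H] - [E]: a potential as above
  (with p = a, q = 1) which is positive definite on all of X: u' > 0, u'' > 0 on C^n minus 0,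
  and positivity in the normal directions along E and H.\<close>
definition calabi_kahler :: "real \<Rightarrow> (real \<Rightarrow> real) \<Rightarrow> bool" where
  "calabi_kahler a u \<longleftrightarrow>
     smooth1_on UNIV u \<and> (\<forall>\<rho>. deriv u \<rho> > 0 \<and> deriv (deriv u) \<rho> > 0) \<and>
     (\<exists>\<delta>>0. \<exists>F G. smooth1_on {-\<delta><..<\<delta>} F \<and> smooth1_on {-\<delta><..<\<delta>} G \<and>
        deriv F 0 > 0 \<and> deriv G 0 > 0 \<and>
        (\<forall>\<rho>. exp \<rho> < \<delta> \<longrightarrow> u \<rho> = \<rho> + F (exp \<rho>)) \<and>
        (\<forall>\<rho>. exp (-\<rho>) < \<delta> \<longrightarrow> u \<rho> = a * \<rho> + G (exp (-\<rho>))))"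

text \<open>A time dependent Calabi symmetric function phi_t on X, t in [0,T), which is smooth on
  X x [0,T) (smooth up to t = 0, expressed via smooth extension to an open set):
  smooth jointly in (t, rho) on C^n minus 0, jointly smooth in (t, e^rho) near E and
  in (t, e^(-rho)) near H.\<close>
definition calabi_smooth_family :: "real \<Rightarrow> (real \<Rightarrow> real \<Rightarrow> real) \<Rightarrow> bool" where
  "calabi_smooth_family T \<phi> \<longleftrightarrow>
     (\<exists>U \<Phi>. open U \<and> {0..<T} \<times> UNIV \<subseteq> U \<and> smooth2_on U \<Phi> \<and>
        (\<forall>t\<in>{0..<T}. \<forall>\<rho>. \<Phi> (t, \<rho>) = \<phi> t \<rho>)) \<and>
     (\<exists>\<delta>>0. \<exists>U F. open U \<and> {0..<T} \<times> {0..<\<delta>} \<subseteq> U \<and> smooth2_on U F \<and>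
        (\<forall>t\<in>{0..<T}. \<forall>\<rho>. exp \<rho> < \<delta> \<longrightarrow> \<phi> t \<rho> = F (t, exp \<rho>))) \<and>
     (\<exists>\<delta>>0. \<exists>U G. open U \<and> {0..<T} \<times> {0..<\<delta>} \<subseteq> U \<and> smooth2_on U G \<and>
        (\<forall>t\<in>{0..<T}. \<forall>\<rho>. exp (-\<rho>) < \<delta> \<longrightarrow> \<phi> t \<rho> = G (t, exp (-\<rho>))))"

text \<open>The angle Theta(alpha) = sum_k arctan(lambda_k) at the point with rho = log|z|^2,
  for omega = i ddbar u(rho), alpha = i ddbar v(rho) on C^n minus 0.  Here
  i ddbar f(rho) = f'(rho) i ddbar rho + f''(rho) i d rho /\ dbar rho, and both forms are
  diagonal in the same frame: eigenvalues of omega^{-1} alpha are v'/u' (multiplicity n-1,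
  directions orthogonal to z) and v''/u'' (multiplicity 1, radial direction).\<close>
definition calabi_angle :: "nat \<Rightarrow> (real \<Rightarrow> real) \<Rightarrow> (real \<Rightarrow> real) \<Rightarrow> real \<Rightarrow> real" where
  "calabi_angle n u v \<rho> =
     real (n - 1) * arctan (deriv v \<rho> / deriv u \<rho>)
     + arctan (deriv (deriv v) \<rho> / deriv (deriv u) \<rho>)"

text \<open>Theta(alpha) > c holds on all of X: on C^n minus 0, and on E and H, where (being
  constant there by symmetry and continuous on X) Theta equals the limit as rho tends to
  -infinity, resp. +infinity.\<close>
definition angle_gt_on_X :: "nat \<Rightarrow> (real \<Rightarrow> real) \<Rightarrow> (real \<Rightarrow> real) \<Rightarrow> real \<Rightarrow> bool" where
  "angle_gt_on_X n u v c \<longleftrightarrow>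
     (\<forall>\<rho>. calabi_angle n u v \<rho> > c) \<and>
     (\<exists>L. ((calabi_angle n u v) \<longlongrightarrow> L) at_bot \<and> L > c) \<and>
     (\<exists>L. ((calabi_angle n u v) \<longlongrightarrow> L) at_top \<and> L > c)"

text \<open>Line bundle mean curvature flow in the Calabi symmetric setting on [0,T):
  alpha_t = alpha_0 + i ddbar phi_t with potential v0 + phi_t, phi_0 = 0, phi smooth on
  X x [0,T), and d/dt phi_t = Theta(alpha_t) - theta_hat.\<close>
definition calabi_LBMCF :: "nat \<Rightarrow> (real \<Rightarrow> real) \<Rightarrow> (real \<Rightarrow> real) \<Rightarrow> real \<Rightarrow> real
     \<Rightarrow> (real \<Rightarrow> real \<Rightarrow> real) \<Rightarrow> bool" where
  "calabi_LBMCF n u v0 \<theta> T \<phi> \<longleftrightarrow>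
     calabi_smooth_family T \<phi> \<and> (\<forall>\<rho>. \<phi> 0 \<rho> = 0) \<and>
     (\<forall>t\<in>{0..<T}. \<forall>\<rho>.
        ((\<lambda>s. \<phi> s \<rho>) has_real_derivative
            (calabi_angle n u (\<lambda>r. v0 r + \<phi> t r) \<rho> - \<theta>)) (at t within {0..<T}))"

end

theory Submission
  imports Defs
begin


lemma pds_append: "pds bs (pds cs g) = pds (bs @ cs) g"
  by (induction bs) auto

lemma smooth2_on_pds: "smooth2_on U g \<Longrightarrow> smooth2_on U (pds cs g)"
  unfolding smooth2_on_def by (simp add: pds_append)

lemma smooth2_pd1: "smooth2_on U g \<Longrightarrow> smooth2_on U (pd1 g)"
  using smooth2_on_pds[of U g "[True]"] by simp

lemma smooth2_pd2: "smooth2_on U g \<Longrightarrow> smooth2_on U (pd2 g)"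
  using smooth2_on_pds[of U g "[False]"] by simp

lemma smooth2_cont: "smooth2_on U g \<Longrightarrow> continuous_on U g"
  unfolding smooth2_on_def by (metis pds.simps(1))

lemma smooth2_D1:
  assumes "smooth2_on U g" "(x,y) \<in> U"
  shows "((\<lambda>x'. g (x',y)) has_real_derivative pd1 g (x,y)) (at x)"
proof -
  have "(\<lambda>x'. g (x',y)) differentiable (at x)"
  proof -
    have "\<forall>(t, s)\<in>U. (\<lambda>t'. pds [] g (t', s)) differentiable at t"
      using assms(1) unfolding smooth2_on_def by blast
    then show ?thesis using assms(2) by auto
  qed
  then show ?thesis by (simp add: pd1_def DERIV_deriv_iff_real_differentiable)
qed

lemma smooth2_D2:
  assumes "smooth2_on U g" "(x,y) \<in> U"
  shows "((\<lambda>y'. g (x,y')) has_real_derivative pd2 g (x,y)) (at y)"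
proof -
  have "(\<lambda>y'. g (x,y')) differentiable (at y)"
  proof -
    have "\<forall>(t, s)\<in>U. (\<lambda>s'. pds [] g (t, s')) differentiable at s"
      using assms(1) unfolding smooth2_on_def by blast
    then show ?thesis using assms(2) by auto
  qed
  then show ?thesis by (simp add: pd2_def DERIV_deriv_iff_real_differentiable)
qed

lemma dist_pair_le: "dist (a::real, b::real) (c, d) \<le> \<bar>a - c\<bar> + \<bar>b - d\<bar>"
proof -
  have "sqrt ((dist a c)\<^sup>2 + (dist b d)\<^sup>2) \<le> sqrt ((\<bar>a - c\<bar> + \<bar>b - d\<bar>)\<^sup>2)"
    by (rule real_sqrt_le_mono) (simp add: dist_real_def power2_eq_square algebra_simps)
  then show ?thesis by (simp add: dist_Pair_Pair)
qed

lemma clairaut: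
  assumes U: "open U" and g: "smooth2_on U g" and p: "(t,s) \<in> U"
  shows "pd1 (pd2 g) (t,s) = pd2 (pd1 g) (t,s)"
proof (rule ccontr)
  let ?a = "pd1 (pd2 g) (t,s)" and ?b = "pd2 (pd1 g) (t,s)"
  assume ne: "?a \<noteq> ?b"
  define e where "e = \<bar>?a - ?b\<bar> / 2"
  have e: "e > 0" using ne by (simp add: e_def)
  have c1: "continuous_on U (pd1 (pd2 g))" using smooth2_cont[OF smooth2_pd1[OF smooth2_pd2[OF g]]] .
  have c2: "continuous_on U (pd2 (pd1 g))" using smooth2_cont[OF smooth2_pd2[OF smooth2_pd1[OF g]]] .
  obtain d1 where d1: "d1 > 0" "\<forall>z\<in>U. dist z (t,s) < d1 \<longrightarrow> dist (pd1 (pd2 g) z) ?a < e"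
    using c1 p e unfolding continuous_on_iff by blast
  obtain d2 where d2: "d2 > 0" "\<forall>z\<in>U. dist z (t,s) < d2 \<longrightarrow> dist (pd2 (pd1 g) z) ?b < e"
    using c2 p e unfolding continuous_on_iff by blast
  obtain d3 where d3: "d3 > 0" "ball (t,s) d3 \<subseteq> U"
    using U p open_contains_ball by blast
  define d where "d = min d1 (min d2 d3)"
  define h where "h = d / 3"
  have h: "h > 0" using d1 d2 d3 by (simp add: h_def d_def)
  have near: "dist (x,y) (t,s) < d" if "t \<le> x" "x \<le> t + h" "s \<le> y" "y \<le> s + h" for x y
  proof -
    have "dist (x,y) (t,s) \<le> \<bar>x - t\<bar> + \<bar>y - s\<bar>" by (rule dist_pair_le)
    also have "\<dots> \<le> 2 * h" using that by auto
    also have "\<dots> < d" using h by (simp add: h_def)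
    finally show ?thesis .
  qed
  have inU: "(x,y) \<in> U" if "t \<le> x" "x \<le> t + h" "s \<le> y" "y \<le> s + h" for x y
  proof -
    have "dist (x,y) (t,s) < d3" using near[OF that] by (simp add: d_def)
    then show ?thesis using d3(2) by (auto simp: dist_commute)
  qed
  define \<Delta> where "\<Delta> = g (t+h, s+h) - g (t+h, s) - g (t, s+h) + g (t, s)"
  obtain \<xi> where \<xi>: "t < \<xi>" "\<xi> < t + h"
    "(\<lambda>x. g (x, s+h) - g (x, s)) (t+h) - (\<lambda>x. g (x, s+h) - g (x, s)) t
       = (t + h - t) * (pd1 g (\<xi>, s+h) - pd1 g (\<xi>, s))"
  proof -
    have "\<exists>z>t. z < t + h \<and> (\<lambda>x. g (x, s+h) - g (x, s)) (t+h) - (\<lambda>x. g (x, s+h) - g (x, s)) t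
       = (t + h - t) * (pd1 g (z, s+h) - pd1 g (z, s))"
    proof (rule MVT2)
      show "t < t + h" using h by simp
      fix x assume "t \<le> x" "x \<le> t + h"
      then have "(x, s+h) \<in> U" "(x, s) \<in> U" using inU h by auto
      then show "((\<lambda>x. g (x, s+h) - g (x, s)) has_real_derivative (pd1 g (x, s+h) - pd1 g (x, s))) (at x)"
        using smooth2_D1[OF g] by (intro derivative_intros) auto
    qed
    then show ?thesis using that by blast
  qed
  obtain \<eta> where \<eta>: "s < \<eta>" "\<eta> < s + h"
    "pd1 g (\<xi>, s+h) - pd1 g (\<xi>, s) = (s + h - s) * pd2 (pd1 g) (\<xi>, \<eta>)"
  proof -
    have "\<exists>z>s. z < s + h \<and> (\<lambda>y. pd1 g (\<xi>, y)) (s+h) - (\<lambda>y. pd1 g (\<xi>, y)) s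
       = (s + h - s) * pd2 (pd1 g) (\<xi>, z)"
    proof (rule MVT2)
      show "s < s + h" using h by simp
      fix y assume "s \<le> y" "y \<le> s + h"
      then have "(\<xi>, y) \<in> U" using inU \<xi> by auto
      then show "((\<lambda>y. pd1 g (\<xi>, y)) has_real_derivative pd2 (pd1 g) (\<xi>, y)) (at y)"
        using smooth2_D2[OF smooth2_pd1[OF g]] by auto
    qed
    then show ?thesis using that by auto
  qed
  obtain \<eta>' where \<eta>': "s < \<eta>'" "\<eta>' < s + h"
    "(\<lambda>y. g (t+h, y) - g (t, y)) (s+h) - (\<lambda>y. g (t+h, y) - g (t, y)) s
       = (s + h - s) * (pd2 g (t+h, \<eta>') - pd2 g (t, \<eta>'))"
  proof -
    have "\<exists>z>s. z < s + h \<and> (\<lambda>y. g (t+h, y) - g (t, y)) (s+h) - (\<lambda>y. g (t+h, y) - g (t, y)) s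
       = (s + h - s) * (pd2 g (t+h, z) - pd2 g (t, z))"
    proof (rule MVT2)
      show "s < s + h" using h by simp
      fix y assume "s \<le> y" "y \<le> s + h"
      then have "(t+h, y) \<in> U" "(t, y) \<in> U" using inU h by auto
      then show "((\<lambda>y. g (t+h, y) - g (t, y)) has_real_derivative (pd2 g (t+h, y) - pd2 g (t, y))) (at y)"
        using smooth2_D2[OF g] by (intro derivative_intros) auto
    qed
    then show ?thesis using that by blast
  qed
  obtain \<xi>' where \<xi>': "t < \<xi>'" "\<xi>' < t + h"
    "pd2 g (t+h, \<eta>') - pd2 g (t, \<eta>') = (t + h - t) * pd1 (pd2 g) (\<xi>', \<eta>')"
  proof -
    have "\<exists>z>t. z < t + h \<and> (\<lambda>x. pd2 g (x, \<eta>')) (t+h) - (\<lambda>x. pd2 g (x, \<eta>')) t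
       = (t + h - t) * pd1 (pd2 g) (z, \<eta>')"
    proof (rule MVT2)
      show "t < t + h" using h by simp
      fix x assume "t \<le> x" "x \<le> t + h"
      then have "(x, \<eta>') \<in> U" using inU \<eta>' by auto
      then show "((\<lambda>x. pd2 g (x, \<eta>')) has_real_derivative pd1 (pd2 g) (x, \<eta>')) (at x)"
        using smooth2_D1[OF smooth2_pd2[OF g]] by auto
    qed
    then show ?thesis using that by auto
  qed
  have "h * (h * pd2 (pd1 g) (\<xi>, \<eta>)) = h * (h * pd1 (pd2 g) (\<xi>', \<eta>'))"
    using \<xi>(3) \<eta>(3) \<eta>'(3) \<xi>'(3) by (simp add: algebra_simps)
  then have eq: "pd2 (pd1 g) (\<xi>, \<eta>) = pd1 (pd2 g) (\<xi>', \<eta>')" using h by simp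
  have "dist (\<xi>, \<eta>) (t,s) < d" "dist (\<xi>', \<eta>') (t,s) < d"
    using near \<xi> \<eta> \<xi>' \<eta>' by auto
  moreover have "(\<xi>, \<eta>) \<in> U" "(\<xi>', \<eta>') \<in> U" using inU \<xi> \<eta> \<xi>' \<eta>' by auto
  ultimately have "dist (pd2 (pd1 g) (\<xi>, \<eta>)) ?b < e" "dist (pd1 (pd2 g) (\<xi>', \<eta>')) ?a < e"
    using d1 d2 by (auto simp: d_def)
  then have "\<bar>?a - ?b\<bar> < 2 * e" using eq by (simp add: dist_real_def)
  then show False by (simp add: e_def)
qed



lemma min_second:
  fixes f f1 :: "real \<Rightarrow> real"
  assumes mn: "\<forall>r. f r \<ge> f x"
    and d1: "\<And>r. (f has_real_derivative f1 r) (at r)"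
    and d2: "(f1 has_real_derivative d) (at x)"
  shows "f1 x = 0" "d \<ge> 0"
proof -
  show z: "f1 x = 0" using DERIV_local_min[OF d1[of x], of 1] mn by auto
  show "d \<ge> 0"
  proof (rule ccontr)
    assume "\<not> d \<ge> 0"
    then obtain e where e: "e > 0" "\<forall>h>0. h < e \<longrightarrow> f1 (x + h) < f1 x"
      using DERIV_neg_dec_right[OF d2] by force
    obtain z where z1: "z > x" "z < x + e/2" and z2: "f (x + e/2) - f x = (x + e/2 - x) * f1 z"
      using MVT2[of x "x + e/2" f f1] d1 e by auto
    have "f1 z < 0" using e(2)[rule_format, of "z - x"] z1 z by auto
    then have "(x + e/2 - x) * f1 z < 0" using e by (intro mult_pos_neg) auto
    then have "f (x + e/2) - f x < 0" using z2 by simp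
    then show False using mn by (metis diff_ge_0_iff_ge not_le)
  qed
qed

lemma smooth1_D:
  assumes "smooth1_on S f" "x \<in> S"
  shows "(f has_real_derivative deriv f x) (at x)"
    "(deriv f has_real_derivative deriv (deriv f) x) (at x)"
    "isCont (deriv (deriv f)) x" "isCont (deriv f) x" "isCont f x"
proof -
  have k: "((deriv ^^ k) f) differentiable (at x)" for k
    using assms unfolding smooth1_on_def by blast
  show a: "(f has_real_derivative deriv f x) (at x)"
    using k[of 0] by (simp add: DERIV_deriv_iff_real_differentiable)
  show b: "(deriv f has_real_derivative deriv (deriv f) x) (at x)"
    using k[of 1] by (simp add: DERIV_deriv_iff_real_differentiable)
  show "isCont (deriv (deriv f)) x"
    using k[of 2] by (simp add: differentiable_imp_continuous_within numeral_2_eq_2)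
  show "isCont (deriv f) x" using b by (rule DERIV_isCont)
  show "isCont f x" using a by (rule DERIV_isCont)
qed

lemma exp_at_bot_right: "filterlim (exp :: real \<Rightarrow> real) (at_right 0) at_bot"
  by (rule tendsto_imp_filterlim_at_right[OF exp_at_bot]) (auto intro: always_eventually)

lemma asym:
  fixes f H H1 H2 :: "real \<Rightarrow> real"
  assumes \<delta>: "\<delta> > 0"
    and eq: "\<forall>\<rho>. exp \<rho> < \<delta> \<longrightarrow> f \<rho> = c * \<rho> + H (exp \<rho>)"
    and dH: "\<And>x. 0 < x \<Longrightarrow> x < \<delta> \<Longrightarrow> (H has_real_derivative H1 x) (at x)"
    and dH1: "\<And>x. 0 < x \<Longrightarrow> x < \<delta> \<Longrightarrow> (H1 has_real_derivative H2 x) (at x)"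
    and l1: "(H1 \<longlongrightarrow> l1) (at_right 0)"
    and l2: "(H2 \<longlongrightarrow> l2) (at_right 0)"
  shows "(deriv f \<longlongrightarrow> c) at_bot"
    "((\<lambda>\<rho>. deriv (deriv f) \<rho> / exp \<rho>) \<longlongrightarrow> l1) at_bot"
proof -
  define S where "S = {..<ln \<delta>}"
  have S: "open S" by (simp add: S_def)
  have inS: "\<rho> \<in> S \<longleftrightarrow> exp \<rho> < \<delta>" for \<rho>
    using \<delta> by (metis S_def exp_less_cancel_iff exp_ln lessThan_iff)
  have df: "deriv f \<rho> = c + exp \<rho> * H1 (exp \<rho>)" if "\<rho> \<in> S" for \<rho>
  proof -
    have "((\<lambda>\<rho>. c * \<rho> + H (exp \<rho>)) has_real_derivative c + exp \<rho> * H1 (exp \<rho>)) (at \<rho>)"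
      using dH[of "exp \<rho>"] that inS
      by (auto intro!: derivative_eq_intros DERIV_chain2[where f=H] simp: algebra_simps)
    then have "(f has_real_derivative c + exp \<rho> * H1 (exp \<rho>)) (at \<rho>)"
      by (rule has_field_derivative_transform_within_open[OF _ S that]) (use eq inS in auto)
    then show ?thesis by (rule DERIV_imp_deriv)
  qed
  have ddf: "deriv (deriv f) \<rho> = exp \<rho> * H1 (exp \<rho>) + exp \<rho> * (exp \<rho> * H2 (exp \<rho>))"
    if "\<rho> \<in> S" for \<rho>
  proof -
    have "((\<lambda>\<rho>. c + exp \<rho> * H1 (exp \<rho>)) has_real_derivative
            exp \<rho> * H1 (exp \<rho>) + exp \<rho> * (exp \<rho> * H2 (exp \<rho>))) (at \<rho>)"
      using dH1[of "exp \<rho>"] that inS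
      by (auto intro!: derivative_eq_intros DERIV_chain2[where f=H1] simp: algebra_simps)
    then have "(deriv f has_real_derivative exp \<rho> * H1 (exp \<rho>) + exp \<rho> * (exp \<rho> * H2 (exp \<rho>))) (at \<rho>)"
      by (rule has_field_derivative_transform_within_open[OF _ S that]) (use df in auto)
    then show ?thesis by (rule DERIV_imp_deriv)
  qed
  have evS: "eventually (\<lambda>\<rho>. \<rho> \<in> S) at_bot"
    unfolding S_def eventually_at_bot_dense by auto
  have L1: "((\<lambda>\<rho>. H1 (exp \<rho>)) \<longlongrightarrow> l1) at_bot"
    using filterlim_compose[OF l1 exp_at_bot_right] .
  have L2: "((\<lambda>\<rho>. H2 (exp \<rho>)) \<longlongrightarrow> l2) at_bot"
    using filterlim_compose[OF l2 exp_at_bot_right] .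
  have "((\<lambda>\<rho>. c + exp \<rho> * H1 (exp \<rho>)) \<longlongrightarrow> c + 0 * l1) at_bot"
    by (intro tendsto_intros exp_at_bot L1)
  then have "((\<lambda>\<rho>. c + exp \<rho> * H1 (exp \<rho>)) \<longlongrightarrow> c) at_bot" by simp
  moreover have "eventually (\<lambda>\<rho>. c + exp \<rho> * H1 (exp \<rho>) = deriv f \<rho>) at_bot"
    using evS df by (auto elim: eventually_mono)
  ultimately show "(deriv f \<longlongrightarrow> c) at_bot" by (rule Lim_transform_eventually)
  have "((\<lambda>\<rho>. H1 (exp \<rho>) + exp \<rho> * H2 (exp \<rho>)) \<longlongrightarrow> l1 + 0 * l2) at_bot"
    by (intro tendsto_intros exp_at_bot L1 L2)
  then have "((\<lambda>\<rho>. H1 (exp \<rho>) + exp \<rho> * H2 (exp \<rho>)) \<longlongrightarrow> l1) at_bot" by simp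
  moreover have "eventually (\<lambda>\<rho>. H1 (exp \<rho>) + exp \<rho> * H2 (exp \<rho>) = deriv (deriv f) \<rho> / exp \<rho>) at_bot"
    using evS ddf by (auto elim!: eventually_mono simp: field_simps)
  ultimately show "((\<lambda>\<rho>. deriv (deriv f) \<rho> / exp \<rho>) \<longlongrightarrow> l1) at_bot" by (rule Lim_transform_eventually)
qed

lemma reflect:
  fixes f :: "real \<Rightarrow> real"
  assumes d1: "\<And>r. (f has_real_derivative deriv f r) (at r)"
    and d2: "\<And>r. (deriv f has_real_derivative deriv (deriv f) r) (at r)"
  shows "deriv (\<lambda>r. f (- r)) = (\<lambda>r. - deriv f (- r))"
    "deriv (deriv (\<lambda>r. f (- r))) = (\<lambda>r. deriv (deriv f) (- r))"
proof -
  have a: "((\<lambda>r. f (- r)) has_real_derivative - deriv f (- r)) (at r)" for r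
  proof -
    have m: "((\<lambda>r::real. - r) has_real_derivative -1) (at r)" by (auto intro!: derivative_eq_intros)
    show ?thesis using DERIV_chain2[OF d1[of "-r"] m] by simp
  qed
  show e1: "deriv (\<lambda>r. f (- r)) = (\<lambda>r. - deriv f (- r))"
    using a DERIV_imp_deriv by blast
  have b: "((\<lambda>r. - deriv f (- r)) has_real_derivative deriv (deriv f) (- r)) (at r)" for r
  proof -
    have m: "((\<lambda>r::real. - r) has_real_derivative -1) (at r)" by (auto intro!: derivative_eq_intros)
    show ?thesis using DERIV_chain2[OF d2[of "-r"] m] by (auto intro!: derivative_eq_intros)
  qed
  show "deriv (deriv (\<lambda>r. f (- r))) = (\<lambda>r. deriv (deriv f) (- r))"
    unfolding e1 using b DERIV_imp_deriv by blast
qed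



definition wb :: "real \<Rightarrow> real" where "wb r = ln (2 + exp r + exp (- r))"
definition wb1 :: "real \<Rightarrow> real" where "wb1 r = (exp r - exp (- r)) / (2 + exp r + exp (- r))"
definition wb2 :: "real \<Rightarrow> real" where "wb2 r = 2 / (2 + exp r + exp (- r))"

lemma wb_D: "(wb has_real_derivative wb1 r) (at r)"
proof -
  have "0 < 2 + exp r + exp (- r)" by (simp add: add_pos_pos)
  then show ?thesis unfolding wb_def wb1_def
    by (auto intro!: derivative_eq_intros simp: field_simps)
qed

lemma wb1_D: "(wb1 has_real_derivative wb2 r) (at r)"
proof -
  have p: "0 < 2 + exp r + exp (- r)" by (simp add: add_pos_pos)
  have e: "exp r * exp (- r) = 1" by (simp add: exp_minus)
  have "((\<lambda>r. (exp r - exp (- r)) / (2 + exp r + exp (- r))) has_real_derivative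
     ((exp r + exp (- r)) * (2 + exp r + exp (- r)) - (exp r - exp (- r)) * (exp r - exp (- r)))
        / (2 + exp r + exp (- r))^2) (at r)"
    using p by (auto intro!: derivative_eq_intros simp: power2_eq_square field_simps)
  moreover have "((exp r + exp (- r)) * (2 + exp r + exp (- r)) - (exp r - exp (- r)) * (exp r - exp (- r)))
        / (2 + exp r + exp (- r))^2 = wb2 r"
  proof -
    have n: "(exp r + exp (- r)) * (2 + exp r + exp (- r)) - (exp r - exp (- r)) * (exp r - exp (- r))
        = 2 * (2 + exp r + exp (- r))"
      using e by (simp add: algebra_simps)
    have gen: "0 < S \<Longrightarrow> 2 * S / S^2 = 2 / S" for S :: real by (simp add: power2_eq_square)
    have "2 * (2 + exp r + exp (- r)) / (2 + exp r + exp (- r))^2 = 2 / (2 + exp r + exp (- r))"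
      by (rule gen[OF p])
    then show ?thesis unfolding n wb2_def .
  qed
  ultimately show ?thesis unfolding wb1_def by simp
qed

lemma wb1_bound: "\<bar>wb1 r\<bar> \<le> 1"
proof -
  have p: "0 < 2 + exp r + exp (- r)" by (simp add: add_pos_pos)
  have "0 < exp r" "0 < exp (-r)" by auto
  then have h: "\<bar>exp r - exp (- r)\<bar> \<le> 2 + exp r + exp (- r)"
    unfolding abs_le_iff by linarith
  show ?thesis unfolding wb1_def abs_divide abs_of_pos[OF p] divide_le_eq_1_pos[OF p] by (rule h)
qed

lemma wb2_pos: "0 < wb2 r"
  unfolding wb2_def by (simp add: add_pos_pos)

lemma wb2_le1: "wb2 r \<le> 2 / exp r"
  unfolding wb2_def by (rule divide_left_mono) (auto simp: add_pos_pos)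

lemma wb2_le2: "wb2 r \<le> 2 / exp (- r)"
  unfolding wb2_def by (rule divide_left_mono) (auto simp: add_pos_pos)

lemma wb_ge: "\<bar>r\<bar> \<le> wb r"
proof -
  have "exp \<bar>r\<bar> \<le> 2 + exp r + exp (- r)"
    by (cases "r \<ge> 0") auto
  moreover have "0 < 2 + exp r + exp (- r)" by (simp add: add_pos_pos)
  ultimately have "ln (exp \<bar>r\<bar>) \<le> wb r" unfolding wb_def
    by (subst ln_le_cancel_iff) auto
  then show ?thesis by simp
qed

lemma wb_pos: "0 < wb r"
proof -
  have "1 < 2 + exp r + exp (- r)" by (simp add: add_pos_pos add.assoc)
  then show ?thesis unfolding wb_def by simp
qed

lemma inf_pos:
  fixes f :: "real \<Rightarrow> real"
  assumes cont: "continuous_on UNIV f" and gt: "\<forall>x. c < f x"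
    and L1: "(f \<longlongrightarrow> L1) at_bot" "c < L1"
    and L2: "(f \<longlongrightarrow> L2) at_top" "c < L2"
  shows "\<exists>m>c. \<forall>x. m \<le> f x"
proof -
  define m1 where "m1 = min ((c + L1)/2) ((c + L2)/2)"
  have m1: "c < m1" using L1 L2 by (simp add: m1_def)
  have "eventually (\<lambda>x. (c + L1)/2 < f x) at_bot"
    using order_tendstoD(1)[OF L1(1), of "(c + L1)/2"] L1(2) by simp
  then obtain R1 where R1: "\<forall>x\<le>R1. (c + L1)/2 < f x" by (auto simp: eventually_at_bot_linorder)
  have "eventually (\<lambda>x. (c + L2)/2 < f x) at_top"
    using order_tendstoD(1)[OF L2(1), of "(c + L2)/2"] L2(2) by simp
  then obtain R2 where R2: "\<forall>x\<ge>R2. (c + L2)/2 < f x" by (auto simp: eventually_at_top_linorder)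
  define R where "R = max \<bar>R1\<bar> \<bar>R2\<bar>"
  obtain x0 where x0: "x0 \<in> {-R..R}" "\<forall>y\<in>{-R..R}. f x0 \<le> f y"
  proof -
    have "\<exists>x\<in>{-R..R}. \<forall>y\<in>{-R..R}. f x \<le> f y"
      by (rule continuous_attains_inf) (auto simp: R_def intro: continuous_on_subset[OF cont])
    then show ?thesis using that by blast
  qed
  show ?thesis
  proof (intro exI[of _ "min m1 (f x0)"] conjI allI)
    show "c < min m1 (f x0)" using m1 gt by simp
    fix x
    show "min m1 (f x0) \<le> f x"
    proof (cases "x \<in> {-R..R}")
      case True then have "f x0 \<le> f x" using x0 by blast
      then show ?thesis by linarith
    next
      case False
      then have "x \<le> R1 \<or> x \<ge> R2" by (auto simp: R_def)
      then have "m1 \<le> f x"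
      proof
        assume "x \<le> R1" then have "(c + L1)/2 < f x" using R1 by blast
        then show ?thesis unfolding m1_def by linarith
      next
        assume "x \<ge> R2" then have "(c + L2)/2 < f x" using R2 by blast
        then show ?thesis unfolding m1_def by linarith
      qed
      then show ?thesis by linarith
    qed
  qed
qed

lemma maxprin:
  fixes Z :: "real \<Rightarrow> real \<Rightarrow> real"
  assumes t1: "0 \<le> t1"
    and cont: "continuous_on ({0..t1} \<times> UNIV) (\<lambda>p. Z (fst p) (snd p))"
    and R: "\<forall>t\<in>{0..t1}. \<forall>\<rho>. R \<le> \<bar>\<rho>\<bar> \<longrightarrow> m < Z t \<rho>"
    and init: "\<forall>\<rho>. m < Z 0 \<rho>"
    and step: "\<And>t \<rho>. 0 < t \<Longrightarrow> t \<le> t1 \<Longrightarrow> (\<forall>r. Z t \<rho> \<le> Z t r)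
                 \<Longrightarrow> (\<forall>s. 0 \<le> s \<longrightarrow> s < t \<longrightarrow> Z t \<rho> < Z s \<rho>) \<Longrightarrow> False"
  shows "\<forall>t\<in>{0..t1}. \<forall>\<rho>. m < Z t \<rho>"
proof (rule ccontr)
  assume "\<not> ?thesis"
  then obtain ta \<rho>a where a: "ta \<in> {0..t1}" "Z ta \<rho>a \<le> m" by (auto simp: not_less)
  define K where "K = {0..t1} \<times> {-R..R}"
  define Zp where "Zp = (\<lambda>p. Z (fst p) (snd p))"
  define S where "S = K \<inter> Zp -` {..m}"
  have Ksub: "K \<subseteq> {0..t1} \<times> UNIV" by (auto simp: K_def)
  have cK: "continuous_on K Zp" using continuous_on_subset[OF cont Ksub] by (simp add: Zp_def)
  have clK: "closed K" by (simp add: K_def closed_Times)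
  have "closed S" unfolding S_def by (rule continuous_closed_preimage[OF cK clK]) simp
  moreover have "compact K" by (simp add: K_def compact_Times)
  ultimately have cS: "compact S" by (metis S_def compact_Int_closed inf.absorb_iff2 inf_le1 inf_commute)
  have inS: "(t, \<rho>) \<in> S" if "t \<in> {0..t1}" "Z t \<rho> \<le> m" for t \<rho>
  proof -
    have "\<bar>\<rho>\<bar> < R" using R that by (meson not_le)
    then show ?thesis using that by (auto simp: S_def K_def Zp_def)
  qed
  have Sne: "S \<noteq> {}" using inS[OF a] by auto
  have "\<exists>x\<in>S. \<forall>y\<in>S. fst x \<le> fst y"
    by (rule continuous_attains_inf[OF cS Sne]) (intro continuous_intros)
  then obtain p where p: "p \<in> S" "\<forall>q\<in>S. fst p \<le> fst q" by blast
  obtain ts \<rho>s where ps: "p = (ts, \<rho>s)" by (cases p)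
  have ts: "ts \<in> {0..t1}" "Z ts \<rho>s \<le> m" using p(1) ps by (auto simp: S_def K_def Zp_def)
  have minS: "ts \<le> t" if "t \<in> {0..t1}" "Z t \<rho> \<le> m" for t \<rho>
    using p(2) inS[OF that] ps by fastforce
  have tpos: "0 < ts" using ts init by (metis atLeastAtMost_iff not_le order_le_less)
  have earlier: "Z ts \<rho>s < Z s \<rho>s" if "0 \<le> s" "s < ts" for s
  proof -
    have "s \<in> {0..t1}" using that ts by auto
    then have "m < Z s \<rho>s" using minS[of s \<rho>s] that by force
    then show ?thesis using ts by simp
  qed
  have spat: "Z ts \<rho>s \<le> Z ts r" for r
  proof (rule ccontr)
    assume "\<not> ?thesis"
    then have lt: "Z ts r < m" using ts by simp
    have cr: "continuous_on {0..t1} (\<lambda>s. Z s r)"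
    proof -
      have "continuous_on {0..t1} (\<lambda>s. (s, r))" by (intro continuous_intros)
      moreover have "(\<lambda>s. (s, r)) ` {0..t1} \<subseteq> {0..t1} \<times> UNIV" by auto
      ultimately show ?thesis using continuous_on_compose2[OF cont, of "{0..t1}" "\<lambda>s. (s, r)"] by simp
    qed
    obtain d where d: "d > 0" "\<forall>s\<in>{0..t1}. dist s ts < d \<longrightarrow> dist (Z s r) (Z ts r) < m - Z ts r"
      using cr ts(1) lt unfolding continuous_on_iff by (metis diff_gt_0_iff_gt)
    define s where "s = max 0 (ts - d/2)"
    have s: "s \<in> {0..t1}" "s < ts" "dist s ts < d" using ts tpos d by (auto simp: s_def dist_real_def)
    then have "\<bar>Z s r - Z ts r\<bar> < m - Z ts r" using d(2) by (auto simp: dist_real_def)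
    then have "Z s r < m" by linarith
    then have "ts \<le> s" using minS[of s r] s by auto
    then show False using s by simp
  qed
  show False using step[of ts \<rho>s] tpos ts spat earlier by auto
qed



lemma isCont_right: "isCont f (0::real) \<Longrightarrow> (f \<longlongrightarrow> f 0) (at_right 0)"
  using continuous_at_imp_continuous_at_within continuous_within by blast

lemma asym_smooth1:
  fixes f H :: "real \<Rightarrow> real"
  assumes \<delta>: "\<delta> > 0"
    and eq: "\<forall>\<rho>. exp \<rho> < \<delta> \<longrightarrow> f \<rho> = c * \<rho> + H (exp \<rho>)"
    and sH: "smooth1_on {-\<delta><..<\<delta>} H"
  shows "(deriv f \<longlongrightarrow> c) at_bot"
    "((\<lambda>\<rho>. deriv (deriv f) \<rho> / exp \<rho>) \<longlongrightarrow> deriv H 0) at_bot"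
proof -
  have z: "0 \<in> {-\<delta><..<\<delta>}" using \<delta> by auto
  have "(deriv f \<longlongrightarrow> c) at_bot \<and> ((\<lambda>\<rho>. deriv (deriv f) \<rho> / exp \<rho>) \<longlongrightarrow> deriv H 0) at_bot"
    using asym[OF \<delta> eq, of "deriv H" "deriv (deriv H)" "deriv H 0" "deriv (deriv H) 0"]
      smooth1_D[OF sH] isCont_right[OF smooth1_D(4)[OF sH z]] isCont_right[OF smooth1_D(3)[OF sH z]]
    by auto
  then show "(deriv f \<longlongrightarrow> c) at_bot"
    "((\<lambda>\<rho>. deriv (deriv f) \<rho> / exp \<rho>) \<longlongrightarrow> deriv H 0) at_bot" by auto
qed

lemma cont_at_pair:
  assumes "open U" "continuous_on U g" "(t, 0) \<in> U"
  shows "isCont (\<lambda>x::real. g (t::real, x)) 0"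
proof -
  have "isCont g (t, 0)" using assms continuous_on_eq_continuous_at by blast
  moreover have "isCont (\<lambda>x::real. (t, x)) 0" by (intro continuous_intros)
  ultimately show ?thesis using isCont_o2 by fastforce
qed

lemma asym_family:
  fixes f H :: "real \<Rightarrow> real" and F :: "real \<times> real \<Rightarrow> real"
  assumes \<delta>: "\<delta> > 0"
    and eq: "\<forall>\<rho>. exp \<rho> < \<delta> \<longrightarrow> f \<rho> = c * \<rho> + (H (exp \<rho>) + F (t, exp \<rho>))"
    and sH: "smooth1_on {-\<delta><..<\<delta>} H"
    and U: "open U" and sF: "smooth2_on U F" and inU: "\<And>x. 0 \<le> x \<Longrightarrow> x < \<delta> \<Longrightarrow> (t, x) \<in> U"
  shows "(deriv f \<longlongrightarrow> c) at_bot"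
    "((\<lambda>\<rho>. deriv (deriv f) \<rho> / exp \<rho>) \<longlongrightarrow> deriv H 0 + pd2 F (t, 0)) at_bot"
proof -
  have z: "0 \<in> {-\<delta><..<\<delta>}" using \<delta> by auto
  have t0: "(t, 0) \<in> U" using inU \<delta> by auto
  have c1: "isCont (\<lambda>x. pd2 F (t, x)) 0"
    by (rule cont_at_pair[OF U smooth2_cont[OF smooth2_pd2[OF sF]] t0])
  have c2: "isCont (\<lambda>x. pd2 (pd2 F) (t, x)) 0"
    by (rule cont_at_pair[OF U smooth2_cont[OF smooth2_pd2[OF smooth2_pd2[OF sF]]] t0])
  have d1: "((\<lambda>x. H x + F (t, x)) has_real_derivative deriv H x + pd2 F (t, x)) (at x)"
    if "0 < x" "x < \<delta>" for x
    using smooth1_D(1)[OF sH, of x] smooth2_D2[OF sF inU[of x]] that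
    by (auto intro!: derivative_intros)
  have d2: "((\<lambda>x. deriv H x + pd2 F (t, x)) has_real_derivative
              deriv (deriv H) x + pd2 (pd2 F) (t, x)) (at x)"
    if "0 < x" "x < \<delta>" for x
    using smooth1_D(2)[OF sH, of x] smooth2_D2[OF smooth2_pd2[OF sF] inU[of x]] that
    by (auto intro!: derivative_intros)
  have l1: "((\<lambda>x. deriv H x + pd2 F (t, x)) \<longlongrightarrow> deriv H 0 + pd2 F (t, 0)) (at_right 0)"
    using isCont_right[of "\<lambda>x. deriv H x + pd2 F (t, x)"] smooth1_D(4)[OF sH z] c1
    by (auto intro!: continuous_intros)
  have l2: "((\<lambda>x. deriv (deriv H) x + pd2 (pd2 F) (t, x)) \<longlongrightarrow>
      deriv (deriv H) 0 + pd2 (pd2 F) (t, 0)) (at_right 0)"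
    using isCont_right[of "\<lambda>x. deriv (deriv H) x + pd2 (pd2 F) (t, x)"] smooth1_D(3)[OF sH z] c2
    by (auto intro!: continuous_intros)
  show "(deriv f \<longlongrightarrow> c) at_bot"
    "((\<lambda>\<rho>. deriv (deriv f) \<rho> / exp \<rho>) \<longlongrightarrow> deriv H 0 + pd2 F (t, 0)) at_bot"
    using asym[OF \<delta> _ d1 d2 l1 l2, of f c] eq by auto
qed

lemma angle_lim:
  fixes u v :: "real \<Rightarrow> real"
  assumes au: "(deriv u \<longlongrightarrow> cu) at_bot" "cu \<noteq> 0"
    and bu: "((\<lambda>\<rho>. deriv (deriv u) \<rho> / exp \<rho>) \<longlongrightarrow> lu) at_bot" "lu \<noteq> 0"
    and av: "(deriv v \<longlongrightarrow> cv) at_bot"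
    and bv: "((\<lambda>\<rho>. deriv (deriv v) \<rho> / exp \<rho>) \<longlongrightarrow> lv) at_bot"
  shows "\<exists>L. (calabi_angle n u v \<longlongrightarrow> L) at_bot"
proof -
  have eq: "calabi_angle n u v = (\<lambda>\<rho>. real (n - 1) * arctan (deriv v \<rho> / deriv u \<rho>)
      + arctan ((deriv (deriv v) \<rho> / exp \<rho>) / (deriv (deriv u) \<rho> / exp \<rho>)))"
    by (rule ext) (simp add: calabi_angle_def)
  have "((\<lambda>\<rho>. real (n - 1) * arctan (deriv v \<rho> / deriv u \<rho>)
      + arctan ((deriv (deriv v) \<rho> / exp \<rho>) / (deriv (deriv u) \<rho> / exp \<rho>)))
      \<longlongrightarrow> real (n - 1) * arctan (cv / cu) + arctan (lv / lu)) at_bot"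
    by (intro tendsto_intros au bu av bv)
  then show ?thesis unfolding eq by blast
qed

lemma lim_top_from_bot:
  fixes f :: "real \<Rightarrow> real"
  assumes "(f \<longlongrightarrow> L) at_bot"
  shows "((\<lambda>x. f (- x)) \<longlongrightarrow> L) at_top"
  using filterlim_compose[OF assms filterlim_uminus_at_bot_at_top] .

lemma cont_snd:
  assumes "\<And>x. isCont g x"
  shows "continuous_on S (\<lambda>p::real \<times> real. g (snd p))"
proof -
  have "continuous_on UNIV g" using assms by (simp add: continuous_at_imp_continuous_on)
  then show ?thesis using continuous_on_compose2[of UNIV g S snd] continuous_on_snd[OF continuous_on_id, of S]
    by auto
qed



lemma smooth1_mono: "S \<subseteq> S' \<Longrightarrow> smooth1_on S' f \<Longrightarrow> smooth1_on S f"
  unfolding smooth1_on_def by blast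

lemma wb2_le_one: "wb2 r \<le> 1"
proof -
  have "0 < exp r" "0 < exp (-r)" by auto
  then have "2 \<le> 2 + exp r + exp (- r)" "0 < 2 + exp r + exp (- r)" by linarith+
  then show ?thesis unfolding wb2_def by (simp add: divide_le_eq_1)
qed

lemma inv_sq_le1: "inverse (1 + y\<^sup>2) \<le> (1::real)"
  by (simp add: inverse_le_1_iff)

lemma inv_sq_pos: "0 < inverse (1 + y\<^sup>2 :: real)"
  by (simp add: add_pos_nonneg)

lemma abs_le_neg: "\<bar>x\<bar> \<le> e \<Longrightarrow> - e \<le> (x::real)"
  by linarith

lemma aux_le: "(1 - i) * y \<le> 0 \<Longrightarrow> y \<le> i * (y::real)"
  by (simp add: left_diff_distrib)

lemma pd2_cong: "(\<lambda>s'. g (t, s')) = (\<lambda>s'. h (t, s')) \<Longrightarrow> pd2 g (t, s) = pd2 h (t, s)"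
  by (simp add: pd2_def)

lemma arctan_sum_lb:
  assumes "n \<ge> 1"
  shows "- (real n * pi) < real (n - 1) * arctan x + arctan y"
proof -
  have "- pi \<le> arctan x" using arctan_bounded[of x] pi_gt_zero by linarith
  then have "real (n - 1) * (- pi) \<le> real (n - 1) * arctan x" by (intro mult_left_mono) auto
  moreover have "- pi < arctan y" using arctan_bounded[of y] pi_gt_zero by linarith
  moreover have "real n * pi = real (n - 1) * pi + pi" using assms by (simp add: of_nat_diff algebra_simps)
  moreover have "real (n - 1) * (- pi) = - (real (n - 1) * pi)" by simp
  ultimately show ?thesis by linarith
qed

theorem lemma4p2:
  fixes n :: nat and a p q \<theta> T :: real
    and u v0 :: "real \<Rightarrow> real" and \<phi> :: "real \<Rightarrow> real \<Rightarrow> real"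
  assumes "n \<ge> 3"
    and "calabi_kahler a u"
    and "calabi_potential p q v0"
    and "T > 0"
    and "calabi_LBMCF n u v0 \<theta> T \<phi>"
    and "angle_gt_on_X n u v0 (real (n - 2) * pi / 2)"
  shows "\<forall>t\<in>{0..<T}. angle_gt_on_X n u (\<lambda>r. v0 r + \<phi> t r) (real (n - 2) * pi / 2)"
proof -
  define c where "c = real (n - 2) * pi / 2"
  obtain du Fu Gu where su: "smooth1_on UNIV u" and upos: "\<forall>\<rho>. deriv u \<rho> > 0 \<and> deriv (deriv u) \<rho> > 0"
    and du: "du > 0" and sFu: "smooth1_on {-du<..<du} Fu" and sGu: "smooth1_on {-du<..<du} Gu"
    and Fu0: "deriv Fu 0 > 0" and Gu0: "deriv Gu 0 > 0"
    and uE: "\<forall>\<rho>. exp \<rho> < du \<longrightarrow> u \<rho> = \<rho> + Fu (exp \<rho>)"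
    and uH: "\<forall>\<rho>. exp (-\<rho>) < du \<longrightarrow> u \<rho> = a * \<rho> + Gu (exp (-\<rho>))"
    using assms(2) unfolding calabi_kahler_def by metis
  obtain dv Fv Gv where sv: "smooth1_on UNIV v0"
    and dv: "dv > 0" and sFv: "smooth1_on {-dv<..<dv} Fv" and sGv: "smooth1_on {-dv<..<dv} Gv"
    and vE: "\<forall>\<rho>. exp \<rho> < dv \<longrightarrow> v0 \<rho> = q * \<rho> + Fv (exp \<rho>)"
    and vH: "\<forall>\<rho>. exp (-\<rho>) < dv \<longrightarrow> v0 \<rho> = p * \<rho> + Gv (exp (-\<rho>))"
    using assms(3) unfolding calabi_potential_def by metis
  have fam: "calabi_smooth_family T \<phi>" and phi0: "\<forall>\<rho>. \<phi> 0 \<rho> = 0"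
    and flow: "\<forall>t\<in>{0..<T}. \<forall>\<rho>. ((\<lambda>s. \<phi> s \<rho>) has_real_derivative
            (calabi_angle n u (\<lambda>r. v0 r + \<phi> t r) \<rho> - \<theta>)) (at t within {0..<T})"
    using assms(5) unfolding calabi_LBMCF_def by auto
  obtain U \<Phi> where U: "open U" "{0..<T} \<times> UNIV \<subseteq> U" and sP: "smooth2_on U \<Phi>"
    and Peq: "\<forall>t\<in>{0..<T}. \<forall>\<rho>. \<Phi> (t, \<rho>) = \<phi> t \<rho>"
    using fam unfolding calabi_smooth_family_def by metis
  obtain dE UE FE where dE: "dE > 0" "open UE" "{0..<T} \<times> {0..<dE} \<subseteq> UE" and sFE: "smooth2_on UE FE"
    and phiE: "\<forall>t\<in>{0..<T}. \<forall>\<rho>. exp \<rho> < dE \<longrightarrow> \<phi> t \<rho> = FE (t, exp \<rho>)"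
    using fam unfolding calabi_smooth_family_def by metis
  obtain dH UH GH where dH: "dH > 0" "open UH" "{0..<T} \<times> {0..<dH} \<subseteq> UH" and sGH: "smooth2_on UH GH"
    and phiH: "\<forall>t\<in>{0..<T}. \<forall>\<rho>. exp (-\<rho>) < dH \<longrightarrow> \<phi> t \<rho> = GH (t, exp (-\<rho>))"
    using fam unfolding calabi_smooth_family_def by metis
  obtain L1 L2 where h6: "\<forall>\<rho>. calabi_angle n u v0 \<rho> > c"
    "(calabi_angle n u v0 \<longlongrightarrow> L1) at_bot" "L1 > c" "(calabi_angle n u v0 \<longlongrightarrow> L2) at_top" "L2 > c"
    using assms(6) unfolding angle_gt_on_X_def c_def by metis

  have Du: "\<And>r. (u has_real_derivative deriv u r) (at r)"
    and DDu: "\<And>r. (deriv u has_real_derivative deriv (deriv u) r) (at r)"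
    and Cu1: "\<And>r. isCont (deriv u) r" and Cu2: "\<And>r. isCont (deriv (deriv u)) r"
    using smooth1_D[OF su] by auto
  have Dv: "\<And>r. (v0 has_real_derivative deriv v0 r) (at r)"
    and DDv: "\<And>r. (deriv v0 has_real_derivative deriv (deriv v0) r) (at r)"
    and Cv1: "\<And>r. isCont (deriv v0) r" and Cv2: "\<And>r. isCont (deriv (deriv v0)) r"
    using smooth1_D[OF sv] by auto
  have u1pos: "\<And>r. deriv u r > 0" and u2pos: "\<And>r. deriv (deriv u) r > 0" using upos by auto

  have uA: "(deriv u \<longlongrightarrow> 1) at_bot" "((\<lambda>\<rho>. deriv (deriv u) \<rho> / exp \<rho>) \<longlongrightarrow> deriv Fu 0) at_bot"
    using asym_smooth1[OF du _ sFu, of u 1] uE by auto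
  define ur where "ur = (\<lambda>r. u (- r))"
  have uB: "(deriv ur \<longlongrightarrow> - a) at_bot" "((\<lambda>\<rho>. deriv (deriv ur) \<rho> / exp \<rho>) \<longlongrightarrow> deriv Gu 0) at_bot"
    using asym_smooth1[OF du _ sGu, of ur "- a"] uH by (auto simp: ur_def)
  have ur1: "deriv ur = (\<lambda>r. - deriv u (- r))" and ur2: "deriv (deriv ur) = (\<lambda>r. deriv (deriv u) (- r))"
    using reflect[OF Du DDu] by (auto simp: ur_def)
  have umono: "deriv u r \<le> deriv u \<rho>" if "r \<le> \<rho>" for r \<rho>
    using DERIV_nonneg_imp_nondecreasing[OF that, of "deriv u"] DDu u2pos less_imp_le by blast
  have uge1: "1 \<le> deriv u \<rho>" for \<rho>
  proof (rule tendsto_upperbound[OF uA(1)])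
    show "eventually (\<lambda>r. deriv u r \<le> deriv u \<rho>) at_bot"
      unfolding eventually_at_bot_linorder using umono by blast
  qed simp
  have age1: "1 \<le> a"
  proof -
    have "- a \<le> -1"
    proof (rule tendsto_upperbound[OF uB(1)])
      show "eventually (\<lambda>r. deriv ur r \<le> -1) at_bot"
        using uge1 by (auto simp: ur1)
    qed simp
    then show ?thesis by simp
  qed

  obtain M where M: "M \<ge> 0" "\<And>\<rho>. wb2 \<rho> / deriv (deriv u) \<rho> \<le> M"
  proof -
    define k1 where "k1 = deriv Fu 0 / 2"
    have k1: "k1 > 0" using Fu0 by (simp add: k1_def)
    have "eventually (\<lambda>\<rho>. k1 < deriv (deriv u) \<rho> / exp \<rho>) at_bot"
      using order_tendstoD(1)[OF uA(2), of k1] Fu0 by (simp add: k1_def)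
    then obtain R1 where R1: "\<forall>\<rho>\<le>R1. k1 < deriv (deriv u) \<rho> / exp \<rho>"
      by (auto simp: eventually_at_bot_linorder)
    define k2 where "k2 = deriv Gu 0 / 2"
    have k2: "k2 > 0" using Gu0 by (simp add: k2_def)
    have "eventually (\<lambda>r. k2 < deriv (deriv u) (-r) / exp r) at_bot"
      using order_tendstoD(1)[OF uB(2), of k2] Gu0 by (simp add: k2_def ur2)
    then obtain R2 where R2: "\<forall>r\<le>R2. k2 < deriv (deriv u) (-r) / exp r"
      by (auto simp: eventually_at_bot_linorder)
    define R where "R = \<bar>R1\<bar> + \<bar>R2\<bar>"
    have "\<exists>x\<in>{-R..R}. \<forall>y\<in>{-R..R}. deriv (deriv u) x \<le> deriv (deriv u) y"
      by (rule continuous_attains_inf) (auto simp: R_def intro!: continuous_at_imp_continuous_on Cu2)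
    then obtain x0 where x0: "\<forall>y\<in>{-R..R}. deriv (deriv u) x0 \<le> deriv (deriv u) y" by blast
    define m1 where "m1 = deriv (deriv u) x0"
    have m1: "m1 > 0" using u2pos by (simp add: m1_def)
    define M where "M = 2/k1 + 2/k2 + 1/m1"
    have pos: "0 \<le> 2/k1" "0 \<le> 2/k2" "0 \<le> 1/m1" using k1 k2 m1 by auto
    show ?thesis
    proof (rule that[of M])
      show "M \<ge> 0" using pos by (simp add: M_def)
      fix \<rho>
      define D where "D = deriv (deriv u) \<rho>"
      have D: "D > 0" using u2pos by (simp add: D_def)
      have cases: "\<rho> \<le> R1 \<or> -\<rho> \<le> R2 \<or> \<rho> \<in> {-R..R}" by (auto simp: R_def)
      have "wb2 \<rho> / D \<le> M"
      proof -
        { assume r1: "\<rho> \<le> R1"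
          have "k1 < D / exp \<rho>" using R1 r1 by (simp add: D_def)
          then have a: "k1 * exp \<rho> < D" by (simp add: pos_less_divide_eq)
          have b: "wb2 \<rho> \<le> 2 * exp \<rho>" using wb2_le2[of \<rho>] by (simp add: exp_minus divide_inverse)
          have "wb2 \<rho> \<le> (2/k1) * (k1 * exp \<rho>)" using b k1 by simp
          also have "\<dots> \<le> (2/k1) * D" using a k1 by (intro mult_left_mono) auto
          finally have "wb2 \<rho> / D \<le> 2/k1" using D by (simp add: pos_divide_le_eq)
          then have ?thesis using pos unfolding M_def by linarith }
        moreover
        { assume r2: "-\<rho> \<le> R2"
          have "k2 < D / exp (-\<rho>)" using R2[rule_format, OF r2] by (simp add: D_def)
          then have a: "k2 * exp (-\<rho>) < D" by (simp add: pos_less_divide_eq)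
          have b: "wb2 \<rho> \<le> 2 * exp (-\<rho>)" using wb2_le1[of \<rho>] by (simp add: exp_minus divide_inverse)
          have "wb2 \<rho> \<le> (2/k2) * (k2 * exp (-\<rho>))" using b k2 by simp
          also have "\<dots> \<le> (2/k2) * D" using a k2 by (intro mult_left_mono) auto
          finally have "wb2 \<rho> / D \<le> 2/k2" using D by (simp add: pos_divide_le_eq)
          then have ?thesis using pos unfolding M_def by linarith }
        moreover
        { assume r3: "\<rho> \<in> {-R..R}"
          have "m1 \<le> D" using x0 r3 by (simp add: m1_def D_def)
          have "wb2 \<rho> / D \<le> 1 / D" using D wb2_le_one by (simp add: divide_right_mono)
          also have "\<dots> \<le> 1 / m1" using m1 \<open>m1 \<le> D\<close> by (simp add: frac_le)
          finally have ?thesis using pos unfolding M_def by linarith }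
        ultimately show ?thesis using cases by blast
      qed
      then show "wb2 \<rho> / deriv (deriv u) \<rho> \<le> M" by (simp add: D_def)
    qed
  qed

  define V1 where "V1 = (\<lambda>t \<rho>. deriv v0 \<rho> + pd2 \<Phi> (t, \<rho>))"
  define V2 where "V2 = (\<lambda>t \<rho>. deriv (deriv v0) \<rho> + pd2 (pd2 \<Phi>) (t, \<rho>))"
  define Th where "Th = (\<lambda>t \<rho>. real (n - 1) * arctan (V1 t \<rho> / deriv u \<rho>)
                              + arctan (V2 t \<rho> / deriv (deriv u) \<rho>))"
  have inU: "(t, \<rho>) \<in> U" if "t \<in> {0..<T}" for t \<rho> using U that by auto
  have vfun: "(\<lambda>r. v0 r + \<phi> t r) = (\<lambda>r. v0 r + \<Phi> (t, r))" if "t \<in> {0..<T}" for t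
    using Peq that by auto
  have vD: "((\<lambda>r. v0 r + \<phi> t r) has_real_derivative V1 t \<rho>) (at \<rho>)" if "t \<in> {0..<T}" for t \<rho>
    unfolding vfun[OF that] V1_def
    using Dv smooth2_D2[OF sP inU[OF that]] by (auto intro!: derivative_intros)
  have vdeq: "deriv (\<lambda>r. v0 r + \<phi> t r) = V1 t" if "t \<in> {0..<T}" for t
    using vD[OF that] DERIV_imp_deriv by blast
  have vDD: "(V1 t has_real_derivative V2 t \<rho>) (at \<rho>)" if "t \<in> {0..<T}" for t \<rho>
    unfolding V1_def V2_def
    using DDv smooth2_D2[OF smooth2_pd2[OF sP] inU[OF that]] by (auto intro!: derivative_intros)
  have vddeq: "deriv (V1 t) = V2 t" if "t \<in> {0..<T}" for t
    using vDD[OF that] DERIV_imp_deriv by blast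
  have Theq: "calabi_angle n u (\<lambda>r. v0 r + \<phi> t r) = Th t" if "t \<in> {0..<T}" for t
    unfolding calabi_angle_def[abs_def] Th_def vdeq[OF that] vddeq[OF that] by simp
  have flowP: "pd1 \<Phi> (t, \<rho>) = Th t \<rho> - \<theta>" if "t \<in> {0<..<T}" for t \<rho>
  proof -
    have t0: "t \<in> {0..<T}" using that by auto
    have "((\<lambda>s. \<phi> s \<rho>) has_real_derivative (Th t \<rho> - \<theta>)) (at t within {0..<T})"
      using flow[rule_format, OF t0, of \<rho>] Theq[OF t0] by simp
    moreover have "at t within {0..<T} = at t"
      by (rule at_within_open_subset[of t "{0<..<T}"]) (use that in auto)
    ultimately have "((\<lambda>s. \<phi> s \<rho>) has_real_derivative (Th t \<rho> - \<theta>)) (at t)" by simp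
    then have "((\<lambda>s. \<Phi> (s, \<rho>)) has_real_derivative (Th t \<rho> - \<theta>)) (at t)"
      by (rule has_field_derivative_transform_within_open[of _ _ _ "{0<..<T}"]) (use that Peq in auto)
    then show ?thesis unfolding pd1_def by (simp add: DERIV_imp_deriv)
  qed
  have v00: "(\<lambda>r. v0 r + \<phi> 0 r) = v0" using phi0 by simp

  have nz1: "\<And>r. deriv u r \<noteq> 0" and nz2: "\<And>r. deriv (deriv u) r \<noteq> 0"
    using u1pos u2pos by (metis less_irrefl)+
  have ceq: "calabi_angle n u v0 = (\<lambda>\<rho>. real (n-1) * arctan (deriv v0 \<rho> / deriv u \<rho>)
      + arctan (deriv (deriv v0) \<rho> / deriv (deriv u) \<rho>))"
    by (rule ext) (simp add: calabi_angle_def)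
  have "continuous_on UNIV (calabi_angle n u v0)" unfolding ceq
    by (intro continuous_at_imp_continuous_on ballI continuous_intros Cu1 Cu2 Cv1 Cv2 nz1 nz2)
  then obtain m0 where m0: "m0 > c" "\<And>\<rho>. m0 \<le> calabi_angle n u v0 \<rho>"
    using inf_pos[OF _ h6(1) h6(2) h6(3) h6(4) h6(5)] by blast

  have main: "m0 \<le> Th t \<rho>" if tT: "t \<in> {0..<T}" for t \<rho>
  proof (rule ccontr)
    assume "\<not> m0 \<le> Th t \<rho>"
    then have lt: "Th t \<rho> < m0" by simp
    define K where "K = real (n - 1) + M"
    have K: "K \<ge> 0" using M(1) by (simp add: K_def)
    have "0 \<le> (K + 1) * t" using K tT by simp
    then have den: "wb \<rho> + (K + 1) * t + 1 > 0" using wb_pos[of \<rho>] by linarith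
    define \<epsilon> where "\<epsilon> = (m0 - Th t \<rho>) / (wb \<rho> + (K + 1) * t + 1)"
    have \<epsilon>: "\<epsilon> > 0" using lt den by (simp add: \<epsilon>_def)
    define Z where "Z = (\<lambda>s r. Th s r + \<epsilon> * wb r + \<epsilon> * (K + 1) * s)"
    define R where "R = (\<bar>m0\<bar> + real n * pi) / \<epsilon>"
    have thb: "\<And>s r. - (real n * pi) < Th s r"
    proof -
      fix s r
      show "- (real n * pi) < Th s r" unfolding Th_def by (rule arctan_sum_lb) (use assms(1) in simp)
    qed
    have "\<forall>s\<in>{0..t}. \<forall>r. m0 < Z s r"
    proof (rule maxprin[where R=R])
      show "0 \<le> t" using tT by simp
      show "continuous_on ({0..t} \<times> UNIV) (\<lambda>p. Z (fst p) (snd p))"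
      proof -
        let ?S = "{0..t} \<times> (UNIV :: real set)"
        have SU: "?S \<subseteq> U" using U(2) tT by auto
        have c1: "continuous_on ?S (pd2 \<Phi>)"
          by (rule continuous_on_subset[OF smooth2_cont[OF smooth2_pd2[OF sP]] SU])
        have c2: "continuous_on ?S (pd2 (pd2 \<Phi>))"
          by (rule continuous_on_subset[OF smooth2_cont[OF smooth2_pd2[OF smooth2_pd2[OF sP]]] SU])
        have cw: "\<And>x. isCont wb x" using wb_D DERIV_isCont by blast
        have eq: "(\<lambda>p. Z (fst p) (snd p)) = (\<lambda>p. real (n - 1) * arctan ((deriv v0 (snd p) + pd2 \<Phi> p) / deriv u (snd p))
            + arctan ((deriv (deriv v0) (snd p) + pd2 (pd2 \<Phi>) p) / deriv (deriv u) (snd p))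
            + \<epsilon> * wb (snd p) + \<epsilon> * (K + 1) * fst p)"
          by (rule ext) (simp add: Z_def Th_def V1_def V2_def)
        show ?thesis unfolding eq
          by (intro continuous_intros c1 c2 cont_snd Cu1 Cu2 Cv1 Cv2 cw nz1 nz2 ballI)
      qed
      show "\<forall>s\<in>{0..t}. \<forall>r. R \<le> \<bar>r\<bar> \<longrightarrow> m0 < Z s r"
      proof (intro ballI allI impI)
        fix s r assume s: "s \<in> {0..t}" and r: "R \<le> \<bar>r\<bar>"
        have "\<epsilon> * R \<le> \<epsilon> * wb r" using r wb_ge[of r] \<epsilon> by (intro mult_left_mono) auto
        moreover have "\<epsilon> * R = \<bar>m0\<bar> + real n * pi" using \<epsilon> by (simp add: R_def)
        moreover have "0 \<le> \<epsilon> * (K + 1) * s" using \<epsilon> K s by simp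
        moreover have "- (real n * pi) < Th s r" by (rule thb)
        moreover have "m0 \<le> \<bar>m0\<bar>" by simp
        ultimately show "m0 < Z s r" unfolding Z_def by linarith
      qed
      show "\<forall>r. m0 < Z 0 r"
      proof
        fix r
        have "calabi_angle n u v0 = Th 0" using Theq[of 0] v00 assms(4) by simp
        then have "m0 \<le> Th 0 r" using m0(2)[of r] by simp
        moreover have "0 < \<epsilon> * wb r" using \<epsilon> wb_pos[of r] by simp
        ultimately show "m0 < Z 0 r" unfolding Z_def by simp
      qed
      show False if "0 < ts" "ts \<le> t" "\<forall>r. Z ts \<rho>s \<le> Z ts r"
        "\<forall>s. 0 \<le> s \<longrightarrow> s < ts \<longrightarrow> Z ts \<rho>s < Z s \<rho>s" for ts \<rho>s
      proof -
        note tpos = that(1) and tle = that(2) and smin = that(3) and tmin = that(4)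
        have tsT: "ts \<in> {0<..<T}" using tpos tle tT by auto
        have ts0: "ts \<in> {0..<T}" using tsT by auto
        have inU': "\<And>r. (ts, r) \<in> U" using inU[OF ts0] .
        define f where "f = (\<lambda>r. pd1 \<Phi> (ts, r) + \<theta> + \<epsilon> * wb r + \<epsilon> * (K + 1) * ts)"
        have fZ: "\<And>r. f r = Z ts r" using flowP[OF tsT] by (simp add: f_def Z_def)
        define f1 where "f1 = (\<lambda>r. pd2 (pd1 \<Phi>) (ts, r) + \<epsilon> * wb1 r)"
        have Df: "(f has_real_derivative f1 r) (at r)" for r
          unfolding f_def f1_def
          using smooth2_D2[OF smooth2_pd1[OF sP] inU'[of r]] wb_D[of r]
          by (auto intro!: derivative_eq_intros)
        have Df1: "(f1 has_real_derivative (pd2 (pd2 (pd1 \<Phi>)) (ts, \<rho>s) + \<epsilon> * wb2 \<rho>s)) (at \<rho>s)"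
          unfolding f1_def
          using smooth2_D2[OF smooth2_pd2[OF smooth2_pd1[OF sP]] inU'[of \<rho>s]] wb1_D[of \<rho>s]
          by (auto intro!: derivative_eq_intros)
        have fmin: "\<forall>r. f r \<ge> f \<rho>s" using smin fZ by simp
        have X1e: "pd2 (pd1 \<Phi>) (ts, \<rho>s) = - (\<epsilon> * wb1 \<rho>s)"
          using min_second(1)[OF fmin Df Df1] by (simp add: f1_def)
        have X2e: "pd2 (pd2 (pd1 \<Phi>)) (ts, \<rho>s) \<ge> - (\<epsilon> * wb2 \<rho>s)"
          using min_second(2)[OF fmin Df Df1] by simp
        have cl1: "pd1 (pd2 \<Phi>) (ts, \<rho>s) = pd2 (pd1 \<Phi>) (ts, \<rho>s)"
          by (rule clairaut[OF U(1) sP inU'])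
        have cl2: "pd1 (pd2 (pd2 \<Phi>)) (ts, \<rho>s) = pd2 (pd2 (pd1 \<Phi>)) (ts, \<rho>s)"
        proof -
          have "pd1 (pd2 (pd2 \<Phi>)) (ts, \<rho>s) = pd2 (pd1 (pd2 \<Phi>)) (ts, \<rho>s)"
            by (rule clairaut[OF U(1) smooth2_pd2[OF sP] inU'])
          also have "\<dots> = pd2 (pd2 (pd1 \<Phi>)) (ts, \<rho>s)"
            by (rule pd2_cong) (use clairaut[OF U(1) sP inU'] in auto)
          finally show ?thesis .
        qed
        define B where "B = deriv u \<rho>s"
        define Dd where "Dd = deriv (deriv u) \<rho>s"
        define X1 where "X1 = pd1 (pd2 \<Phi>) (ts, \<rho>s)"
        define X2 where "X2 = pd1 (pd2 (pd2 \<Phi>)) (ts, \<rho>s)"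
        define y1 where "y1 = V1 ts \<rho>s / B"
        define y2 where "y2 = V2 ts \<rho>s / Dd"
        define g where "g = (\<lambda>s. Z s \<rho>s)"
        have T1: "((\<lambda>s. pd2 \<Phi> (s, \<rho>s)) has_real_derivative X1) (at ts)"
          unfolding X1_def by (rule smooth2_D1[OF smooth2_pd2[OF sP] inU'])
        have T2: "((\<lambda>s. pd2 (pd2 \<Phi>) (s, \<rho>s)) has_real_derivative X2) (at ts)"
          unfolding X2_def by (rule smooth2_D1[OF smooth2_pd2[OF smooth2_pd2[OF sP]] inU'])
        have G: "(g has_real_derivative (real (n - 1) * (inverse (1 + y1\<^sup>2) * (X1 / B))
                   + inverse (1 + y2\<^sup>2) * (X2 / Dd) + \<epsilon> * (K + 1))) (at ts)"
          unfolding g_def Z_def Th_def V1_def V2_def y1_def y2_def B_def Dd_def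
          using T1 T2 nz1[of \<rho>s] nz2[of \<rho>s] by (auto intro!: derivative_eq_intros)
        have pos: "0 < real (n - 1) * (inverse (1 + y1\<^sup>2) * (X1 / B))
                   + inverse (1 + y2\<^sup>2) * (X2 / Dd) + \<epsilon> * (K + 1)"
        proof -
          define i1 where "i1 = inverse (1 + y1\<^sup>2)"
          define i2 where "i2 = inverse (1 + y2\<^sup>2)"
          have B1: "1 \<le> B" using uge1 by (simp add: B_def)
          have Dpos: "0 < Dd" using u2pos by (simp add: Dd_def)
          have i1: "0 < i1" "i1 \<le> 1" unfolding i1_def by (rule inv_sq_pos, rule inv_sq_le1)
          have i2: "0 < i2" "i2 \<le> 1" unfolding i2_def by (rule inv_sq_pos, rule inv_sq_le1)
          have X1v: "X1 = - (\<epsilon> * wb1 \<rho>s)" using cl1 X1e by (simp add: X1_def)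
          have "\<bar>X1\<bar> = \<epsilon> * \<bar>wb1 \<rho>s\<bar>" using \<epsilon> by (simp add: X1v abs_mult)
          also have "\<dots> \<le> \<epsilon> * 1" using \<epsilon> wb1_bound[of \<rho>s] by (intro mult_left_mono) auto
          finally have aX1: "\<bar>X1\<bar> \<le> \<epsilon>" by simp
          have "\<bar>X1 / B\<bar> = \<bar>X1\<bar> / B" using B1 by (simp add: abs_divide)
          also have "\<dots> \<le> \<bar>X1\<bar>" using B1 mult_left_mono[OF B1, of "\<bar>X1\<bar>"] by (simp add: divide_le_eq)
          finally have aX1B: "\<bar>X1 / B\<bar> \<le> \<epsilon>" using aX1 by linarith
          have "\<bar>i1 * (X1 / B)\<bar> = i1 * \<bar>X1 / B\<bar>" using i1 by (simp add: abs_mult)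
          also have "\<dots> \<le> 1 * \<bar>X1 / B\<bar>" using i1 by (intro mult_right_mono) auto
          finally have "\<bar>i1 * (X1 / B)\<bar> \<le> \<epsilon>" using aX1B by linarith
          then have "- \<epsilon> \<le> i1 * (X1 / B)" by (rule abs_le_neg)
          then have t1: "real (n - 1) * (- \<epsilon>) \<le> real (n - 1) * (i1 * (X1 / B))"
            by (intro mult_left_mono) auto
          have X2v: "- (\<epsilon> * wb2 \<rho>s) \<le> X2" using cl2 X2e by (simp add: X2_def)
          have "- (\<epsilon> * wb2 \<rho>s) / Dd \<le> X2 / Dd" using X2v Dpos by (intro divide_right_mono) auto
          moreover have "- (\<epsilon> * wb2 \<rho>s) / Dd = - (\<epsilon> * (wb2 \<rho>s / Dd))" by simp
          moreover have "\<epsilon> * (wb2 \<rho>s / Dd) \<le> \<epsilon> * M"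
            using M(2)[of \<rho>s] \<epsilon> by (intro mult_left_mono) (auto simp: Dd_def)
          ultimately have X2D: "- (\<epsilon> * M) \<le> X2 / Dd" by linarith
          have eM: "0 \<le> \<epsilon> * M" using \<epsilon> M(1) by simp
          have t2: "- (\<epsilon> * M) \<le> i2 * (X2 / Dd)"
          proof (cases "0 \<le> X2 / Dd")
            case True then have "0 \<le> i2 * (X2 / Dd)" using i2 by (intro mult_nonneg_nonneg) auto
            then show ?thesis using eM by linarith
          next
            case False
            then have "(1 - i2) * (X2 / Dd) \<le> 0" using i2 by (intro mult_nonneg_nonpos) auto
            then have "X2 / Dd \<le> i2 * (X2 / Dd)" by (rule aux_le)
            then show ?thesis using X2D by linarith
          qed
          have e1: "\<epsilon> * (K + 1) = real (n - 1) * \<epsilon> + \<epsilon> * M + \<epsilon>" by (simp add: K_def algebra_simps)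
          have e2: "real (n - 1) * (- \<epsilon>) = - (real (n - 1) * \<epsilon>)" by simp
          show ?thesis using t1 t2 e1 e2 \<epsilon> unfolding i1_def i2_def by linarith
        qed
        obtain d where d: "d > 0" "\<forall>h>0. h < d \<longrightarrow> g (ts - h) < g ts"
          using DERIV_pos_inc_left[OF G pos] by blast
        define h where "h = min (d/2) ts"
        have h: "h > 0" "h < d" "0 \<le> ts - h" "ts - h < ts" using d tpos by (auto simp: h_def)
        have "g (ts - h) < g ts" using d(2) h by blast
        moreover have "Z ts \<rho>s < Z (ts - h) \<rho>s" using tmin h by blast
        ultimately show False by (simp add: g_def)
      qed
    qed
    then have "m0 < Z t \<rho>" using tT by auto
    moreover have "\<epsilon> * (wb \<rho> + (K + 1) * t + 1) = m0 - Th t \<rho>"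
      using den by (simp add: \<epsilon>_def)
    then have "Z t \<rho> = m0 - \<epsilon>" unfolding Z_def by (simp add: algebra_simps)
    ultimately show False using \<epsilon> by simp
  qed

  show ?thesis
  proof
    fix t assume t: "t \<in> {0..<T}"
    define v where "v = (\<lambda>r. v0 r + \<phi> t r)"
    have Thc: "calabi_angle n u v = Th t" using Theq[OF t] by (simp add: v_def)
    have ge: "\<And>\<rho>. m0 \<le> calabi_angle n u v \<rho>" using main[OF t] Thc by simp
    define dd where "dd = min dv dE"
    have dd: "dd > 0" using dv dE by (simp add: dd_def)
    have eqE: "\<forall>\<rho>. exp \<rho> < dd \<longrightarrow> v \<rho> = q * \<rho> + (Fv (exp \<rho>) + FE (t, exp \<rho>))"
      using vE phiE t by (auto simp: v_def dd_def)
    have sub1: "{-dd<..<dd} \<subseteq> {-dv<..<dv}" by (auto simp: dd_def)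
    have inE: "(t, x) \<in> UE" if "0 \<le> x" "x < dd" for x using dE(3) t that by (auto simp: dd_def)
    have vA: "(deriv v \<longlongrightarrow> q) at_bot"
      "((\<lambda>\<rho>. deriv (deriv v) \<rho> / exp \<rho>) \<longlongrightarrow> deriv Fv 0 + pd2 FE (t, 0)) at_bot"
      using asym_family[OF dd eqE smooth1_mono[OF sub1 sFv] dE(2) sFE inE] by auto
    obtain LB where LB: "(calabi_angle n u v \<longlongrightarrow> LB) at_bot"
      using angle_lim[OF uA(1) _ uA(2) _ vA(1) vA(2)] Fu0 by auto
    have LBm: "m0 \<le> LB" by (rule tendsto_lowerbound[OF LB]) (use ge in auto)
    define vr where "vr = (\<lambda>r. v (- r))"
    define dd2 where "dd2 = min dv dH"
    have dd2: "dd2 > 0" using dv dH by (simp add: dd2_def)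
    have eqH: "\<forall>\<rho>. exp \<rho> < dd2 \<longrightarrow> vr \<rho> = (- p) * \<rho> + (Gv (exp \<rho>) + GH (t, exp \<rho>))"
      using vH phiH t by (auto simp: vr_def v_def dd2_def)
    have sub2: "{-dd2<..<dd2} \<subseteq> {-dv<..<dv}" by (auto simp: dd2_def)
    have inH: "(t, x) \<in> UH" if "0 \<le> x" "x < dd2" for x using dH(3) t that by (auto simp: dd2_def)
    have vB: "(deriv vr \<longlongrightarrow> - p) at_bot"
      "((\<lambda>\<rho>. deriv (deriv vr) \<rho> / exp \<rho>) \<longlongrightarrow> deriv Gv 0 + pd2 GH (t, 0)) at_bot"
      using asym_family[OF dd2 eqH smooth1_mono[OF sub2 sGv] dH(2) sGH inH] by auto
    obtain LT' where LT': "(calabi_angle n ur vr \<longlongrightarrow> LT') at_bot"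
      using angle_lim[OF uB(1) _ uB(2) _ vB(1) vB(2)] age1 Gu0 by auto
    have dv1: "deriv v = V1 t" using vdeq[OF t] by (simp add: v_def)
    have Dv1: "(v has_real_derivative deriv v r) (at r)" for r using vD[OF t] dv1 by (simp add: v_def)
    have Dv2: "(deriv v has_real_derivative deriv (deriv v) r) (at r)" for r
      using vDD[OF t] vddeq[OF t] dv1 by simp
    have vr1: "deriv vr = (\<lambda>r. - deriv v (- r))" and vr2: "deriv (deriv vr) = (\<lambda>r. deriv (deriv v) (- r))"
      using reflect[OF Dv1 Dv2] by (auto simp: vr_def)
    have refl: "(\<lambda>x. calabi_angle n ur vr (- x)) = calabi_angle n u v"
    proof (rule ext)
      fix x
      have a1: "deriv ur (-x) = - deriv u x" using ur1 by simp
      have a2: "deriv (deriv ur) (-x) = deriv (deriv u) x" using ur2 by simp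
      have b1: "deriv vr (-x) = - deriv v x" using vr1 by simp
      have b2: "deriv (deriv vr) (-x) = deriv (deriv v) x" using vr2 by simp
      show "calabi_angle n ur vr (- x) = calabi_angle n u v x"
        by (simp only: calabi_angle_def a1 a2 b1 b2 minus_divide_divide)
    qed
    have LT: "(calabi_angle n u v \<longlongrightarrow> LT') at_top"
      using lim_top_from_bot[OF LT'] unfolding refl .
    have LTm: "m0 \<le> LT'" by (rule tendsto_lowerbound[OF LT]) (use ge in auto)
    have "angle_gt_on_X n u v c"
      unfolding angle_gt_on_X_def
      using ge m0(1) LB LBm LT LTm by (meson less_le_trans)
    then show "angle_gt_on_X n u (\<lambda>r. v0 r + \<phi> t r) (real (n - 2) * pi / 2)"
      by (simp add: v_def c_def)
  qed
qed

end
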